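(* Let $r\le s$ be integers, $n=s-r+1$, $\beta_r,\dots,\beta_s$ pairwise distinct real numbers, $B_j=e^{\beta_j}$. For $1\le k\le n$ and $r\le i\le s$ let $$I_{ki}=2i^{2r-s+1-i}\int\frac{d\alpha}{2\pi}\,e^{(k-\frac{n+1}{2})\alpha}\prod_{j=r}^{i}\frac{1}{2\cosh\frac12(\alpha-\beta_j)}\prod_{j=i}^{s}\frac{1}{2\sinh\frac12(\alpha-\beta_j)}$$ (integral along a horizontal line slightly above the real axis), $J_{ki}=I_{ki}+(-1)^{s+i}\overline{I_{ki}}$, and $$F_{ji}=\frac{1}{\prod_{k=r,k\ne j}^{i}(B_j-B_k)\prod_{k=i}^{s}(B_j+B_k)}\ (r\le j\le i),\qquad G_{ji}=\frac{(-1)^n}{\prod_{k=r}^{i}(B_j+B_k)\prod_{k=i,k\ne j}^{s}(B_j-B_k)}\ (i\le j\le s).$$ Then $$I_{ki}=\frac{i^{s+1-i}}{\pi}B_i^{1/2}\Big(\prod_{j=r}^sB_j\Big)^{1/2}\Big(\sum_{j=r}^{i}(-B_j)^{k-1}\beta_jF_{ji}+\sum_{j=i}^{s}B_j^{k-1}(\beta_j+\pi i)G_{ji}\Big),$$ $$J_{ki}=2i^{s-i}B_i^{1/2}\Big(\prod_{j=r}^sB_j\Big)^{1/2}\sum_{j=r}^{i}(-B_j)^{k-1}F_{ji}=-2i^{s-i}B_i^{1/2}\Big(\prod_{j=r}^sB_j\Big)^{1/2}\sum_{j=i}^{s}B_j^{k-1}G_{ji}.$$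
   Context: $i=\sqrt{-1}$ where it appears as a base of powers; $B_j^{1/2}=e^{\beta_j/2}$; the bar denotes complex conjugation. *)

theory Defs
  imports "HOL-Analysis.Analysis"
begin

definition nn :: "int \<Rightarrow> int \<Rightarrow> nat" where
  "nn r s = nat (s - r + 1)"

definition integrandI :: "int \<Rightarrow> int \<Rightarrow> (int \<Rightarrow> real) \<Rightarrow> nat \<Rightarrow> int \<Rightarrow> complex \<Rightarrow> complex" where
  "integrandI r s \<beta> k i z =
     exp (complex_of_real (real k - (real (nn r s) + 1) / 2) * z)
     * (\<Prod>j\<in>{r..i}. 1 / (2 * cosh ((z - complex_of_real (\<beta> j)) / 2)))
     * (\<Prod>j\<in>{i..s}. 1 / (2 * sinh ((z - complex_of_real (\<beta> j)) / 2)))"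

definition Ival :: "int \<Rightarrow> int \<Rightarrow> (int \<Rightarrow> real) \<Rightarrow> real \<Rightarrow> nat \<Rightarrow> int \<Rightarrow> complex" where
  "Ival r s \<beta> \<epsilon> k i =
     2 * \<i> powi (2 * r - s + 1 - i)
     * (integral UNIV (\<lambda>t::real. integrandI r s \<beta> k i (complex_of_real t + \<i> * complex_of_real \<epsilon>))
        / complex_of_real (2 * pi))"

definition Jval :: "int \<Rightarrow> int \<Rightarrow> (int \<Rightarrow> real) \<Rightarrow> real \<Rightarrow> nat \<Rightarrow> int \<Rightarrow> complex" where
  "Jval r s \<beta> \<epsilon> k i = Ival r s \<beta> \<epsilon> k i + (-1) powi (s + i) * cnj (Ival r s \<beta> \<epsilon> k i)"

definition Fco :: "int \<Rightarrow> int \<Rightarrow> (int \<Rightarrow> real) \<Rightarrow> int \<Rightarrow> int \<Rightarrow> real" where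
  "Fco r s \<beta> j i = 1 / ((\<Prod>k\<in>{r..i} - {j}. exp (\<beta> j) - exp (\<beta> k))
                         * (\<Prod>k\<in>{i..s}. exp (\<beta> j) + exp (\<beta> k)))"

definition Gco :: "int \<Rightarrow> int \<Rightarrow> (int \<Rightarrow> real) \<Rightarrow> int \<Rightarrow> int \<Rightarrow> real" where
  "Gco r s \<beta> j i = (-1) ^ nn r s / ((\<Prod>k\<in>{r..i}. exp (\<beta> j) + exp (\<beta> k))
                         * (\<Prod>k\<in>{i..s} - {j}. exp (\<beta> j) - exp (\<beta> k)))"

end

theory Submission
  imports Defs "HOL-Computational_Algebra.Polynomial" "HOL-Real_Asymp.Real_Asymp"
begin

lemma lagrange_monomial:
  fixes x :: "'a \<Rightarrow> complex"
  assumes fin: "finite S" and inj: "inj_on x S" and m: "m < card S"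
  shows "w ^ m = (\<Sum>j\<in>S. x j ^ m / (\<Prod>l\<in>S-{j}. x j - x l) * (\<Prod>l\<in>S-{j}. w - x l))"
proof -
  define c where "c j = x j ^ m / (\<Prod>l\<in>S-{j}. x j - x l)" for j
  define Q where "Q = (\<Sum>j\<in>S. smult (c j) (\<Prod>l\<in>S-{j}. [:- x l, 1:])) - monom 1 m"
  have pQ: "poly Q z = (\<Sum>j\<in>S. c j * (\<Prod>l\<in>S-{j}. z - x l)) - z ^ m" for z
    by (simp add: Q_def poly_sum poly_prod poly_monom)
  have dprod: "degree (\<Prod>l\<in>S-{j}. [:- x l, 1:]) \<le> card S - 1" if "j \<in> S" for j
  proof -
    have "degree (\<Prod>l\<in>S-{j}. [:- x l, 1:]) \<le> (\<Sum>l\<in>S-{j}. degree [:- x l, 1:])"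
      using degree_prod_sum_le[of "S-{j}" "\<lambda>l. [:- x l, 1:]"] fin by (simp add: o_def)
    also have "\<dots> = card (S - {j})" by simp
    also have "\<dots> \<le> card S - 1"
      using that by (auto simp: card_Diff_singleton fin)
    finally show ?thesis .
  qed
  have dQ: "degree Q \<le> card S - 1"
    unfolding Q_def
  proof (rule order.trans[OF degree_diff_le_max], rule max.boundedI)
    show "degree (\<Sum>j\<in>S. smult (c j) (\<Prod>l\<in>S-{j}. [:- x l, 1:])) \<le> card S - 1"
      by (rule degree_sum_le) (use fin dprod order.trans[OF degree_smult_le] in auto)
    show "degree (monom (1::complex) m) \<le> card S - 1" using m by (simp add: degree_monom_eq)
  qed
  have roots: "poly Q (x j) = 0" if "j \<in> S" for j
  proof -
    have "(\<Sum>i\<in>S-{j}. c i * (\<Prod>l\<in>S-{i}. x j - x l)) = 0"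
    proof (rule sum.neutral, rule ballI)
        fix i assume "i \<in> S - {j}"
        then have "j \<in> S - {i}" using that by auto
        then have "(\<Prod>l\<in>S-{i}. x j - x l) = 0"
          using fin by (intro prod_zero) auto
        then show "c i * (\<Prod>l\<in>S-{i}. x j - x l) = 0" by simp
    qed
    then have "(\<Sum>i\<in>S. c i * (\<Prod>l\<in>S-{i}. x j - x l)) = c j * (\<Prod>l\<in>S-{j}. x j - x l)"
      using sum.remove[OF fin that, of "\<lambda>i. c i * (\<Prod>l\<in>S-{i}. x j - x l)"] by simp
    also have "\<dots> = x j ^ m"
    proof -
      have "(\<Prod>l\<in>S-{j}. x j - x l) \<noteq> 0"
        using fin inj that by (auto simp: inj_on_def)
      then show ?thesis by (simp add: c_def)
    qed
    finally show ?thesis by (simp add: pQ)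
  qed
  have "Q = 0"
  proof (rule ccontr)
    assume "Q \<noteq> 0"
    have "card S = card (x ` S)" using inj by (simp add: card_image)
    also have "\<dots> \<le> card {z. poly Q z = 0}"
      by (intro card_mono poly_roots_finite[OF \<open>Q \<noteq> 0\<close>]) (use roots in auto)
    also have "\<dots> \<le> degree Q" by (rule card_poly_roots_bound[OF \<open>Q \<noteq> 0\<close>])
    finally show False using dQ m by linarith
  qed
  then have "poly Q w = 0" by simp
  then have "w ^ m = (\<Sum>j\<in>S. c j * (\<Prod>l\<in>S-{j}. w - x l))" using pQ[of w] by simp
  then show ?thesis by (simp only: c_def)
qed

lemma partial_fraction:
  fixes x :: "'a \<Rightarrow> complex"
  assumes fin: "finite S" and inj: "inj_on x S" and m: "m < card S" and w: "w \<notin> x ` S"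
  shows "w ^ m / (\<Prod>l\<in>S. w - x l) = (\<Sum>j\<in>S. x j ^ m / (\<Prod>l\<in>S-{j}. x j - x l) / (w - x j))"
proof -
  have P0: "(\<Prod>l\<in>S. w - x l) \<noteq> 0" using w fin by auto
  have "w ^ m / (\<Prod>l\<in>S. w - x l) = (\<Sum>j\<in>S. x j ^ m / (\<Prod>l\<in>S-{j}. x j - x l) * (\<Prod>l\<in>S-{j}. w - x l)) / (\<Prod>l\<in>S. w - x l)"
    by (subst lagrange_monomial[OF fin inj m, of w]) (rule refl)
  also have "\<dots> = (\<Sum>j\<in>S. x j ^ m / (\<Prod>l\<in>S-{j}. x j - x l) * (\<Prod>l\<in>S-{j}. w - x l) / (\<Prod>l\<in>S. w - x l))"
    by (simp add: sum_divide_distrib)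
  also have "\<dots> = (\<Sum>j\<in>S. x j ^ m / (\<Prod>l\<in>S-{j}. x j - x l) / (w - x j))"
  proof (rule sum.cong[OF refl])
    fix j assume j: "j \<in> S"
    have e: "(\<Prod>l\<in>S. w - x l) = (w - x j) * (\<Prod>l\<in>S-{j}. w - x l)"
      using fin j by (simp add: prod.remove)
    have "(\<Prod>l\<in>S-{j}. w - x l) \<noteq> 0" using P0 e by auto
    moreover have "w - x j \<noteq> 0" using w j by auto
    ultimately show "x j ^ m / (\<Prod>l\<in>S-{j}. x j - x l) * (\<Prod>l\<in>S-{j}. w - x l) / (\<Prod>l\<in>S. w - x l) = x j ^ m / (\<Prod>l\<in>S-{j}. x j - x l) / (w - x j)"
      by (cases "(\<Prod>l\<in>S-{j}. x j - x l) = 0") (simp_all add: e field_simps)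
  qed
  finally show ?thesis .
qed

lemma residue_sum_zero:
  fixes x :: "'a \<Rightarrow> complex"
  assumes fin: "finite S" and inj: "inj_on x S" and m: "Suc m < card S"
  shows "(\<Sum>j\<in>S. x j ^ m / (\<Prod>l\<in>S-{j}. x j - x l)) = 0"
proof -
  obtain w where w: "w \<notin> x ` S"
    using ex_new_if_finite[OF infinite_UNIV_char_0, of "x ` S"] fin by auto
  define d where "d j = (\<Prod>l\<in>S-{j}. x j - x l)" for j
  have 1: "w ^ Suc m / (\<Prod>l\<in>S. w - x l) = (\<Sum>j\<in>S. x j ^ Suc m / d j / (w - x j))"
    unfolding d_def by (rule partial_fraction[OF fin inj m w])
  have 2: "w ^ m / (\<Prod>l\<in>S. w - x l) = (\<Sum>j\<in>S. x j ^ m / d j / (w - x j))"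
    unfolding d_def by (rule partial_fraction[OF fin inj _ w]) (use m in auto)
  have "w ^ Suc m / (\<Prod>l\<in>S. w - x l) = w * (w ^ m / (\<Prod>l\<in>S. w - x l))" by simp
  also have "\<dots> = (\<Sum>j\<in>S. w * (x j ^ m / d j / (w - x j)))" by (simp add: 2 sum_distrib_left)
  also have "\<dots> = (\<Sum>j\<in>S. x j ^ m / d j + x j ^ Suc m / d j / (w - x j))"
  proof (rule sum.cong[OF refl])
    fix j assume "j \<in> S"
    then have "w - x j \<noteq> 0" using w by auto
    then show "w * (x j ^ m / d j / (w - x j)) = x j ^ m / d j + x j ^ Suc m / d j / (w - x j)"
      by (cases "d j = 0") (simp_all add: field_simps)
  qed
  also have "\<dots> = (\<Sum>j\<in>S. x j ^ m / d j) + w ^ Suc m / (\<Prod>l\<in>S. w - x l)"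
    by (simp only: sum.distrib 1)
  finally show ?thesis unfolding d_def by simp
qed

definition Lg :: "complex \<Rightarrow> complex" where
  "Lg z = \<i> * of_real pi / 2 + Ln (- \<i> * z)"

lemma Lg_notin: "Im z > 0 \<Longrightarrow> - \<i> * z \<notin> \<real>\<^sub>\<le>\<^sub>0"
  by (simp add: complex_nonpos_Reals_iff)

lemma Lg_diff:
  assumes a: "Im a > 0" and b: "Im b > 0"
  shows "Lg a - Lg b = Ln (a / b)"
proof -
  define d where "d = Ln (- \<i> * a) - Ln (- \<i> * b)"
  have ra: "Re (- \<i> * a) > 0" using a by simp
  have rb: "Re (- \<i> * b) > 0" using b by simp
  have 1: "\<bar>Im (Ln (- \<i> * a))\<bar> < pi/2" by (rule Re_Ln_pos_lt_imp[OF ra])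
  have 2: "\<bar>Im (Ln (- \<i> * b))\<bar> < pi/2" by (rule Re_Ln_pos_lt_imp[OF rb])
  have i1: "-pi < Im d" "Im d \<le> pi" using 1 2 by (auto simp: d_def)
  have a0: "a \<noteq> 0" using a by auto
  have b0: "b \<noteq> 0" using b by auto
  have "exp d = (- \<i> * a) / (- \<i> * b)"
    unfolding d_def using a0 b0 by (simp add: exp_diff)
  also have "\<dots> = a / b" by simp
  finally have "Ln (a / b) = d" using Ln_exp[OF i1] by simp
  then show ?thesis by (simp add: Lg_def d_def)
qed

lemma Lg_deriv:
  assumes "Im (exp (z + c) - x) > 0"
  shows "((\<lambda>z. Lg (exp (z + c) - x)) has_field_derivative exp (z + c) / (exp (z + c) - x)) (at z)"
proof -
  have nn: "- \<i> * (exp (z + c) - x) \<notin> \<real>\<^sub>\<le>\<^sub>0" by (rule Lg_notin[OF assms])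
  have ne: "exp (z + c) - x \<noteq> 0" using assms by auto
  have "((\<lambda>z. Ln (- \<i> * (exp (z + c) - x))) has_field_derivative
        inverse (- \<i> * (exp (z + c) - x)) * (- \<i> * (exp (z + c) * (1 + 0)) )) (at z)"
  proof -
    have D: "((\<lambda>z. - \<i> * (exp (z + c) - x)) has_field_derivative (- \<i> * (exp (z + c) * (1 + 0)))) (at z)"
      by (auto intro!: derivative_eq_intros)
    show ?thesis
      using DERIV_chain2[of Ln _ "\<lambda>z. - \<i> * (exp (z + c) - x)", OF has_field_derivative_Ln[OF nn] D] by simp
  qed
  then have "((\<lambda>z. \<i> * of_real pi / 2 + Ln (- \<i> * (exp (z + c) - x))) has_field_derivative
        0 + inverse (- \<i> * (exp (z + c) - x)) * (- \<i> * (exp (z + c) * (1 + 0)) )) (at z)"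
    by (intro DERIV_add) auto
  moreover have "0 + inverse (- \<i> * (exp (z + c) - x)) * (- \<i> * (exp (z + c) * (1 + 0))) = exp (z + c) / (exp (z + c) - x)"
    using ne by (simp add: field_simps)
  ultimately show ?thesis by (simp add: Lg_def)
qed

lemma Lg_pos: assumes "r > 0" shows "Lg (of_real r) = of_real (ln r)"
proof -
  have "- \<i> * of_real r = of_real r * (- \<i>)" by simp
  then have "Ln (- \<i> * of_real r) = ln r + Ln (- \<i>)" using Ln_times_of_real[OF assms, of "- \<i>"] by (simp add: Ln_of_real[OF assms] mult.commute)
  then show ?thesis by (simp add: Lg_def)
qed

lemma Lg_neg: assumes "r > 0" shows "Lg (- of_real r) = of_real (ln r) + of_real pi * \<i>"
proof -
  have "- \<i> * (- of_real r) = of_real r * \<i>" by simp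
  then have "Ln (- \<i> * (- of_real r)) = ln r + Ln \<i>" using Ln_times_of_real[OF assms, of "\<i>"] by (simp add: Ln_of_real[OF assms] mult.commute)
  then show ?thesis by (simp add: Lg_def)
qed

lemma exp_abs_integrable: "(\<lambda>t::real. exp (- \<bar>t\<bar>)) integrable_on UNIV"
proof -
  have i1: "(\<lambda>t::real. exp (- 1 * t)) integrable_on {0..}"
    by (rule integrable_on_exp_minus_to_infinity) simp
  have i2: "(\<lambda>t::real. exp (- \<bar>t\<bar>)) integrable_on {0..}"
    by (rule integrable_spike[OF i1 negligible_empty]) auto
  have a2: "(\<lambda>t::real. exp (- \<bar>t\<bar>)) absolutely_integrable_on {0..}"
    by (rule nonnegative_absolutely_integrable_1[OF i2]) auto
  have sub1: "uminus ` {..0::real} \<subseteq> {0..}" by auto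
  have sub2: "uminus ` {0::real..} \<subseteq> {..0}" by auto
  have leb: "{..0::real} \<in> sets lebesgue" by simp
  have a1: "(\<lambda>t::real. exp (- \<bar>t\<bar>)) absolutely_integrable_on {..0}"
    using has_absolute_integral_reflect_real[OF sub1 sub2 leb, of "\<lambda>t. exp (- \<bar>t\<bar>)" "integral {0..} (\<lambda>t. exp (- \<bar>t\<bar>))"] a2
    by simp
  have i3: "(\<lambda>t::real. exp (- \<bar>t\<bar>)) integrable_on {..0}"
    using a1 by (rule set_lebesgue_integral_eq_integral(1))
  have "(\<lambda>t::real. exp (- \<bar>t\<bar>)) integrable_on ({..0} \<union> {0..})"
  proof (rule integrable_Un[OF _ i3 i2])
    have "{..0::real} \<inter> {0..} = {0}" by auto
    then show "negligible ({..0::real} \<inter> {0..})" by simp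
  qed
  moreover have "{..0} \<union> {0..} = (UNIV :: real set)" by auto
  ultimately show ?thesis by simp
qed

definition W :: "real \<Rightarrow> real \<Rightarrow> complex" where
  "W \<epsilon> t = exp (of_real t + \<i> * of_real \<epsilon>)"

lemma W_Im: "Im (W \<epsilon> t) = exp t * sin \<epsilon>" by (simp add: W_def Im_exp)
lemma W_Re: "Re (W \<epsilon> t) = exp t * cos \<epsilon>" by (simp add: W_def Re_exp)
lemma W_norm: "norm (W \<epsilon> t) = exp t" by (simp add: W_def)
lemma W_Im_pos: "0 < \<epsilon> \<Longrightarrow> \<epsilon> < pi \<Longrightarrow> Im (W \<epsilon> t) > 0"
  by (simp add: W_Im sin_gt_zero)
lemma W_nz: "W \<epsilon> t \<noteq> 0" by (simp add: W_def)

lemma W_bound1: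
  assumes "Im x = 0" "0 < \<epsilon>" "\<epsilon> < pi"
  shows "sin \<epsilon> * norm x \<le> norm (W \<epsilon> t - x)"
proof -
  define \<rho> where "\<rho> = exp t"
  define c where "c = cos \<epsilon>"
  define s where "s = sin \<epsilon>"
  define a where "a = Re x"
  have s0: "s \<ge> 0" unfolding s_def using assms by (simp add: sin_ge_zero)
  have nx: "norm x = \<bar>a\<bar>" using assms(1) by (simp add: a_def norm_complex_def)
  have nw: "norm (W \<epsilon> t - x) = sqrt ((\<rho> * c - a)\<^sup>2 + (\<rho> * s)\<^sup>2)"
    using assms(1) by (simp add: norm_complex_def W_Re W_Im \<rho>_def c_def s_def a_def)
  have sc: "s\<^sup>2 = 1 - c\<^sup>2" unfolding s_def c_def by (simp add: sin_squared_eq)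
  have "(\<rho> * c - a)\<^sup>2 + (\<rho> * s)\<^sup>2 - (s * \<bar>a\<bar>)\<^sup>2 = (\<rho> - c * a)\<^sup>2"
    by (simp add: power_mult_distrib sc power2_abs) (simp add: power2_eq_square algebra_simps)
  then have "(s * \<bar>a\<bar>)\<^sup>2 \<le> (\<rho> * c - a)\<^sup>2 + (\<rho> * s)\<^sup>2"
    by (smt (verit) zero_le_power2)
  then have "s * \<bar>a\<bar> \<le> sqrt ((\<rho> * c - a)\<^sup>2 + (\<rho> * s)\<^sup>2)" by (rule real_le_rsqrt)
  then show ?thesis by (simp add: nx nw s_def)
qed

lemma W_bound2:
  assumes "Im x = 0"
  shows "sin \<epsilon> * exp t \<le> norm (W \<epsilon> t - x)"
proof -
  have "sin \<epsilon> * exp t \<le> \<bar>Im (W \<epsilon> t - x)\<bar>" using assms by (simp add: W_Im) (metis abs_ge_self mult.commute)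
  also have "\<dots> \<le> norm (W \<epsilon> t - x)" by (rule abs_Im_le_cmod)
  finally show ?thesis .
qed

lemma main_integral:
  fixes x :: "'a \<Rightarrow> complex" and S :: "'a set"
  assumes fin: "finite S" and inj: "inj_on x S" and re: "\<And>l. l \<in> S \<Longrightarrow> Im (x l) = 0"
    and nz: "\<And>l. l \<in> S \<Longrightarrow> x l \<noteq> 0"
    and k1: "1 \<le> k" and kN: "k < card S" and e0: "0 < \<epsilon>" and epi: "\<epsilon> < pi"
  defines "g \<equiv> (\<lambda>t. W \<epsilon> t ^ k / (\<Prod>l\<in>S. W \<epsilon> t - x l))"
    and "A \<equiv> (\<lambda>l. x l ^ (k - 1) / (\<Prod>m\<in>S-{l}. x l - x m))"
  shows "g integrable_on UNIV \<and> integral UNIV g = - (\<Sum>l\<in>S. A l * Lg (- x l))"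
proof -
  define N where "N = card S"
  define s where "s = sin \<epsilon>"
  have s0: "s > 0" unfolding s_def using e0 epi by (simp add: sin_gt_zero)
  have ImWx: "Im (W \<epsilon> t - x l) > 0" if "l \<in> S" for t l
    using W_Im_pos[OF e0 epi] re[OF that] by simp
  have Wx0: "W \<epsilon> t - x l \<noteq> 0" if "l \<in> S" for t l
    using ImWx[OF that, of t] by auto
  have Wnot: "W \<epsilon> t \<notin> x ` S" for t
    using Wx0 by force
  define D0 where "D0 = (\<Prod>l\<in>S. s * norm (x l))"
  have D0: "D0 > 0" unfolding D0_def using s0 nz by (intro prod_pos) auto
  define K where "K = 1 / D0 + 1 / s ^ N"
  have normg: "norm (g t) = exp t ^ k / (\<Prod>l\<in>S. norm (W \<epsilon> t - x l))" for t
    by (simp add: g_def norm_divide norm_power prod_norm W_norm)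
  have bound: "norm (g t) \<le> K * exp (- \<bar>t\<bar>)" for t
  proof (cases "t \<le> 0")
    case True
    have P: "D0 \<le> (\<Prod>l\<in>S. norm (W \<epsilon> t - x l))"
      unfolding D0_def s_def
      by (intro prod_mono) (use W_bound1[OF re e0 epi] s0 s_def in auto)
    have "exp t ^ k \<le> exp t"
    proof -
      have "exp t \<le> 1" using True by simp
      then show ?thesis using k1 by (simp add: power_le_one_iff power_decreasing[of 1 k "exp t", simplified])
    qed
    have "norm (g t) \<le> exp t ^ k / D0"
      unfolding normg by (rule divide_left_mono[OF P]) (use D0 P in \<open>auto intro!: mult_pos_pos\<close>)
    also have "\<dots> \<le> exp t / D0" using \<open>exp t ^ k \<le> exp t\<close> D0 by (simp add: divide_right_mono)
    also have "\<dots> = (1 / D0) * exp (- \<bar>t\<bar>)" using True by simp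
    also have "\<dots> \<le> K * exp (- \<bar>t\<bar>)" unfolding K_def using s0 by (simp add: distrib_right)
    finally show ?thesis .
  next
    case False
    have P: "(s * exp t) ^ N \<le> (\<Prod>l\<in>S. norm (W \<epsilon> t - x l))"
    proof -
      have "(\<Prod>l\<in>S. s * exp t) \<le> (\<Prod>l\<in>S. norm (W \<epsilon> t - x l))"
        by (intro prod_mono) (use W_bound2[OF re] s0 s_def in auto)
      then show ?thesis by (simp add: N_def)
    qed
    have pos: "(s * exp t) ^ N > 0" using s0 by simp
    have "norm (g t) \<le> exp t ^ k / (s * exp t) ^ N"
      unfolding normg by (rule divide_left_mono[OF P]) (use pos P in \<open>auto intro!: mult_pos_pos\<close>)
    also have "\<dots> = (1 / s ^ N) * (1 / exp t ^ (N - k))"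
    proof -
      have "exp t ^ N = exp t ^ k * exp t ^ (N - k)" using kN N_def by (simp flip: power_add)
      then show ?thesis using s0 by (simp add: power_mult_distrib field_simps)
    qed
    also have "\<dots> \<le> (1 / s ^ N) * exp (- \<bar>t\<bar>)"
    proof -
      have "exp t \<le> exp t ^ (N - k)"
        using False kN N_def by (intro power_increasing_iff[THEN iffD2, of "exp t" 1 "N - k", simplified]) auto
      then have "1 / exp t ^ (N - k) \<le> 1 / exp t" by (simp add: frac_le)
      also have "\<dots> = exp (- \<bar>t\<bar>)" using False by (simp add: exp_minus field_simps)
      finally show ?thesis using s0 by (intro mult_left_mono) auto
    qed
    also have "\<dots> \<le> K * exp (- \<bar>t\<bar>)" unfolding K_def using D0 by (simp add: distrib_right)
    finally show ?thesis .
  qed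

  have Kpos: "K > 0" unfolding K_def using D0 s0 by (intro add_pos_pos) auto
  have hint: "(\<lambda>t. K * exp (- \<bar>t\<bar>)) integrable_on UNIV"
    using integrable_cmul[OF exp_abs_integrable, of K] by simp
  define \<Phi> where "\<Phi> t = (\<Sum>l\<in>S. A l * Lg (W \<epsilon> t - x l))" for t
  have gsum: "(\<Sum>l\<in>S. A l * (W \<epsilon> t / (W \<epsilon> t - x l))) = g t" for t
  proof -
    have "(\<Sum>l\<in>S. A l * (W \<epsilon> t / (W \<epsilon> t - x l))) = W \<epsilon> t * (\<Sum>l\<in>S. A l / (W \<epsilon> t - x l))"
      by (simp add: sum_distrib_left mult.commute)
    also have "(\<Sum>l\<in>S. A l / (W \<epsilon> t - x l)) = W \<epsilon> t ^ (k - 1) / (\<Prod>l\<in>S. W \<epsilon> t - x l)"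
      unfolding A_def by (rule partial_fraction[OF fin inj _ Wnot, symmetric]) (use kN in simp)
    also have "W \<epsilon> t * (W \<epsilon> t ^ (k - 1) / (\<Prod>l\<in>S. W \<epsilon> t - x l)) = g t"
    proof -
      have "W \<epsilon> t * W \<epsilon> t ^ (k - 1) = W \<epsilon> t ^ k" using k1
        by (metis One_nat_def Suc_pred less_eq_Suc_le power_Suc)
      then show ?thesis by (simp add: g_def)
    qed
    finally show ?thesis .
  qed
  have deriv: "(\<Phi> has_vector_derivative g t) (at t within X)" for t X
  proof -
    define c where "c = \<i> * complex_of_real \<epsilon>"
    have Wc: "W \<epsilon> u = exp (complex_of_real u + c)" for u by (simp add: W_def c_def)
    have D: "((\<lambda>z. \<Sum>l\<in>S. A l * Lg (exp (z + c) - x l)) has_field_derivative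
           (\<Sum>l\<in>S. A l * (exp (complex_of_real t + c) / (exp (complex_of_real t + c) - x l)))) (at (complex_of_real t))"
    proof (rule DERIV_sum, rule DERIV_cmult)
      fix l assume "l \<in> S"
      then have "Im (exp (complex_of_real t + c) - x l) > 0" using ImWx[of l t] by (simp add: Wc)
      then show "((\<lambda>z. Lg (exp (z + c) - x l)) has_field_derivative
           exp (complex_of_real t + c) / (exp (complex_of_real t + c) - x l)) (at (complex_of_real t))"
        by (rule Lg_deriv)
    qed
    have \<Phi>eq: "\<Phi> = (\<lambda>u. \<Sum>l\<in>S. A l * Lg (exp (complex_of_real u + c) - x l))"
      by (simp add: \<Phi>_def Wc fun_eq_iff)
    have gt: "g t = (\<Sum>l\<in>S. A l * (exp (complex_of_real t + c) / (exp (complex_of_real t + c) - x l)))"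
      using gsum[of t] by (simp add: Wc)
    show ?thesis unfolding \<Phi>eq gt by (rule has_vector_derivative_real_field[OF D])
  qed
  have int_ab: "(g has_integral (\<Phi> b - \<Phi> a)) {a..b}" if "a \<le> b" for a b
    by (rule fundamental_theorem_of_calculus[OF that]) (use deriv in auto)
  have sumA: "(\<Sum>l\<in>S. A l) = 0"
    unfolding A_def by (rule residue_sum_zero[OF fin inj]) (use k1 kN in simp)
  have lim_bot: "(\<lambda>m::nat. \<Phi> (- real m)) \<longlonglongrightarrow> (\<Sum>l\<in>S. A l * Lg (- x l))"
  proof -
    have z: "(\<lambda>m::nat. W \<epsilon> (- real m)) \<longlonglongrightarrow> 0"
    proof (rule tendsto_norm_zero_cancel)
      show "(\<lambda>m::nat. norm (W \<epsilon> (- real m))) \<longlonglongrightarrow> 0" unfolding W_norm by real_asymp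
    qed
    have l1: "(\<lambda>m::nat. Lg (W \<epsilon> (- real m) - x l)) \<longlonglongrightarrow> Lg (- x l)" if "l \<in> S" for l
    proof -
      have nn: "- \<i> * (0 - x l) \<notin> \<real>\<^sub>\<le>\<^sub>0"
        using re[OF that] nz[OF that] by (auto simp: complex_nonpos_Reals_iff complex_eq_iff)
      have cont: "isCont (\<lambda>z. \<i> * complex_of_real pi / 2 + Ln (- \<i> * z)) (0 - x l)"
        using nn by (auto intro!: continuous_intros)
      have "(\<lambda>m::nat. \<i> * complex_of_real pi / 2 + Ln (- \<i> * (W \<epsilon> (- real m) - x l))) \<longlonglongrightarrow>
              \<i> * complex_of_real pi / 2 + Ln (- \<i> * (0 - x l))"
        by (rule isCont_tendsto_compose[OF cont, of "\<lambda>m. W \<epsilon> (- real m) - x l"]) (intro tendsto_intros z)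
      then show ?thesis by (simp add: Lg_def)
    qed
    show ?thesis unfolding \<Phi>_def by (intro tendsto_sum tendsto_mult_left l1)
  qed
  have lim_top: "(\<lambda>m::nat. \<Phi> (real m)) \<longlonglongrightarrow> 0"
  proof -
    have eq: "\<Phi> t = (\<Sum>l\<in>S. A l * Ln (1 - x l * inverse (W \<epsilon> t)))" for t
    proof -
      have "\<Phi> t = (\<Sum>l\<in>S. A l * (Lg (W \<epsilon> t - x l) - Lg (W \<epsilon> t))) + (\<Sum>l\<in>S. A l) * Lg (W \<epsilon> t)"
        by (simp add: \<Phi>_def sum_distrib_right algebra_simps sum_subtractf)
      also have "\<dots> = (\<Sum>l\<in>S. A l * (Lg (W \<epsilon> t - x l) - Lg (W \<epsilon> t)))" using sumA by simp
      also have "\<dots> = (\<Sum>l\<in>S. A l * Ln (1 - x l * inverse (W \<epsilon> t)))"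
      proof (rule sum.cong[OF refl])
        fix l assume l: "l \<in> S"
        have "Lg (W \<epsilon> t - x l) - Lg (W \<epsilon> t) = Ln ((W \<epsilon> t - x l) / W \<epsilon> t)"
          by (rule Lg_diff[OF ImWx[OF l] W_Im_pos[OF e0 epi]])
        also have "(W \<epsilon> t - x l) / W \<epsilon> t = 1 - x l * inverse (W \<epsilon> t)"
          using W_nz[of \<epsilon> t] by (simp add: field_simps)
        finally show "A l * (Lg (W \<epsilon> t - x l) - Lg (W \<epsilon> t)) = A l * Ln (1 - x l * inverse (W \<epsilon> t))" by simp
      qed
      finally show ?thesis .
    qed
    have z: "(\<lambda>m::nat. inverse (W \<epsilon> (real m))) \<longlonglongrightarrow> 0"
    proof (rule tendsto_norm_zero_cancel)
      show "(\<lambda>m::nat. norm (inverse (W \<epsilon> (real m)))) \<longlonglongrightarrow> 0" unfolding norm_inverse W_norm by real_asymp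
    qed
    have cont1: "isCont Ln (1 - x l * 0)" for l
      by (rule continuous_at_Ln) (simp add: complex_nonpos_Reals_iff)
    have "(\<lambda>m::nat. \<Sum>l\<in>S. A l * Ln (1 - x l * inverse (W \<epsilon> (real m)))) \<longlonglongrightarrow> (\<Sum>l\<in>S. A l * Ln (1 - x l * 0))"
      by (intro tendsto_sum tendsto_mult_left isCont_tendsto_compose[OF cont1] tendsto_intros z)
    then show ?thesis unfolding eq by simp
  qed
  define f where "f m t = (if t \<in> {- real m..real m} then g t else 0)" for m :: nat and t
  have fint: "f m integrable_on UNIV" for m
    unfolding f_def Henstock_Kurzweil_Integration.integrable_restrict_UNIV
    using int_ab[of "- real m" "real m"] by (auto simp: integrable_on_def)
  have fval: "integral UNIV (f m) = \<Phi> (real m) - \<Phi> (- real m)" for m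
    unfolding f_def Henstock_Kurzweil_Integration.integral_restrict_UNIV
    using int_ab[of "- real m" "real m"] by (simp add: integral_unique)
  have fle: "norm (f m t) \<le> K * exp (- \<bar>t\<bar>)" if "t \<in> UNIV" for m t
    using bound[of t] Kpos by (simp add: f_def)
  have fconv: "(\<lambda>m. f m t) \<longlonglongrightarrow> g t" if "t \<in> UNIV" for t
  proof (rule tendsto_eventually)
    obtain M :: nat where M: "\<bar>t\<bar> \<le> real M" using real_arch_simple by blast
    show "\<forall>\<^sub>F m in sequentially. f m t = g t"
      unfolding eventually_sequentially
      by (rule exI[of _ M]) (use M in \<open>auto simp: f_def\<close>)
  qed
  have gi: "g integrable_on UNIV" and gl: "(\<lambda>m. integral UNIV (f m)) \<longlonglongrightarrow> integral UNIV g"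
    using dominated_convergence[of f UNIV "\<lambda>t. K * exp (- \<bar>t\<bar>)" g, OF fint hint fle fconv] by auto
  have "(\<lambda>m. integral UNIV (f m)) \<longlonglongrightarrow> 0 - (\<Sum>l\<in>S. A l * Lg (- x l))"
    unfolding fval by (intro tendsto_diff lim_top lim_bot)
  with gl have "integral UNIV g = 0 - (\<Sum>l\<in>S. A l * Lg (- x l))" by (rule LIMSEQ_unique)
  with gi show ?thesis by simp
qed

lemma cosh_recip:
  fixes z :: complex and b :: real
  shows "1 / (2 * cosh ((z - complex_of_real b) / 2)) = exp ((z + complex_of_real b) / 2) / (exp z + complex_of_real (exp b))"
proof -
  define E where "E = exp ((z + complex_of_real b) / 2)"
  have E0: "E \<noteq> 0" by (simp add: E_def)
  have "E * (2 * cosh ((z - complex_of_real b) / 2)) = E * exp ((z - complex_of_real b) / 2) + E * exp (- ((z - complex_of_real b) / 2))"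
    by (simp add: cosh_field_def algebra_simps)
  also have "\<dots> = exp z + exp (complex_of_real b)"
    unfolding E_def by (simp flip: exp_add add: field_simps)
  finally have "E * (2 * cosh ((z - complex_of_real b) / 2)) = exp z + complex_of_real (exp b)"
    by (simp add: exp_of_real)
  then show ?thesis using E0 by (metis E_def div_by_1 divide_divide_eq_right nonzero_mult_div_cancel_left)
qed

lemma sinh_recip:
  fixes z :: complex and b :: real
  shows "1 / (2 * sinh ((z - complex_of_real b) / 2)) = exp ((z + complex_of_real b) / 2) / (exp z - complex_of_real (exp b))"
proof -
  define E where "E = exp ((z + complex_of_real b) / 2)"
  have E0: "E \<noteq> 0" by (simp add: E_def)
  have "E * (2 * sinh ((z - complex_of_real b) / 2)) = E * exp ((z - complex_of_real b) / 2) - E * exp (- ((z - complex_of_real b) / 2))"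
    by (simp add: sinh_field_def right_diff_distrib)
  also have "\<dots> = exp z - exp (complex_of_real b)"
    unfolding E_def by (simp flip: exp_add add: field_simps)
  finally have "E * (2 * sinh ((z - complex_of_real b) / 2)) = exp z - complex_of_real (exp b)"
    by (simp add: exp_of_real)
  then show ?thesis using E0 by (metis E_def div_by_1 divide_divide_eq_right nonzero_mult_div_cancel_left)
qed

lemma integrand_eq:
  fixes z :: complex
  assumes ri: "r \<le> i" and isx: "i \<le> s"
  shows "integrandI r s \<beta> k i z = complex_of_real (exp (\<beta> i / 2)) * complex_of_real (exp ((\<Sum>j\<in>{r..s}. \<beta> j) / 2))
     * (exp z ^ k / ((\<Prod>j\<in>{r..i}. exp z + complex_of_real (exp (\<beta> j))) * (\<Prod>j\<in>{i..s}. exp z - complex_of_real (exp (\<beta> j)))))"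
proof -
  define P1 where "P1 = (\<Prod>j\<in>{r..i}. exp z + complex_of_real (exp (\<beta> j)))"
  define P2 where "P2 = (\<Prod>j\<in>{i..s}. exp z - complex_of_real (exp (\<beta> j)))"
  have c1: "(\<Prod>j\<in>{r..i}. 1 / (2 * cosh ((z - complex_of_real (\<beta> j)) / 2)))
        = exp (\<Sum>j\<in>{r..i}. (z + complex_of_real (\<beta> j)) / 2) / P1"
    by (simp add: cosh_recip P1_def exp_sum prod_dividef)
  have c2: "(\<Prod>j\<in>{i..s}. 1 / (2 * sinh ((z - complex_of_real (\<beta> j)) / 2)))
        = exp (\<Sum>j\<in>{i..s}. (z + complex_of_real (\<beta> j)) / 2) / P2"
    by (simp add: sinh_recip P2_def exp_sum prod_dividef)
  have card1: "card {r..i} = nat (i - r + 1)" by simp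
  have card2: "card {i..s} = nat (s - i + 1)" by simp
  have nn: "real (nn r s) = real_of_int (s - r + 1)" unfolding nn_def using ri isx by simp
  have sumb: "(\<Sum>j\<in>{r..i}. \<beta> j) + (\<Sum>j\<in>{i..s}. \<beta> j) = (\<Sum>j\<in>{r..s}. \<beta> j) + \<beta> i"
  proof -
    have u: "{r..i} \<union> {i..s} = {r..s}" using ri isx by auto
    have n: "{r..i} \<inter> {i..s} = {i}" using ri isx by auto
    show ?thesis using sum.union_inter[of "{r..i}" "{i..s}" \<beta>] u n by simp
  qed
  have expo: "complex_of_real (real k - (real (nn r s) + 1) / 2) * z
      + (\<Sum>j\<in>{r..i}. (z + complex_of_real (\<beta> j)) / 2) + (\<Sum>j\<in>{i..s}. (z + complex_of_real (\<beta> j)) / 2)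
      = of_nat k * z + complex_of_real (\<beta> i / 2) + complex_of_real ((\<Sum>j\<in>{r..s}. \<beta> j) / 2)"
  proof -
    define a where "a = real k - (real (nn r s) + 1) / 2"
    have ka: "a + real_of_int (i - r + 1) / 2 + real_of_int (s - i + 1) / 2 = real k"
    proof -
      have "real_of_int (i - r + 1) = real_of_int i - real_of_int r + 1" by simp
      moreover have "real_of_int (s - i + 1) = real_of_int s - real_of_int i + 1" by simp
      moreover have "real_of_int (s - r + 1) = real_of_int s - real_of_int r + 1" by simp
      ultimately show ?thesis unfolding a_def nn by (simp add: field_simps)
    qed
    have e1: "(\<Sum>j\<in>{r..i}. (z + complex_of_real (\<beta> j)) / 2) = complex_of_real (real_of_int (i - r + 1)) * z / 2 + complex_of_real (\<Sum>j\<in>{r..i}. \<beta> j) / 2"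
    proof -
      have "of_nat (nat (i - r + 1)) = complex_of_real (real_of_int (i - r + 1))" using ri by simp
      then show ?thesis by (simp add: sum.distrib sum_divide_distrib add_divide_distrib)
    qed
    have e2: "(\<Sum>j\<in>{i..s}. (z + complex_of_real (\<beta> j)) / 2) = complex_of_real (real_of_int (s - i + 1)) * z / 2 + complex_of_real (\<Sum>j\<in>{i..s}. \<beta> j) / 2"
    proof -
      have "of_nat (nat (s - i + 1)) = complex_of_real (real_of_int (s - i + 1))" using isx by simp
      then show ?thesis by (simp add: sum.distrib sum_divide_distrib add_divide_distrib)
    qed
    have "complex_of_real a * z + (complex_of_real (real_of_int (i - r + 1)) * z / 2 + complex_of_real (\<Sum>j\<in>{r..i}. \<beta> j) / 2)
        + (complex_of_real (real_of_int (s - i + 1)) * z / 2 + complex_of_real (\<Sum>j\<in>{i..s}. \<beta> j) / 2)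
        = complex_of_real (a + real_of_int (i - r + 1) / 2 + real_of_int (s - i + 1) / 2) * z
          + complex_of_real (((\<Sum>j\<in>{r..i}. \<beta> j) + (\<Sum>j\<in>{i..s}. \<beta> j)) / 2)"
      by (simp add: algebra_simps)
    also have "\<dots> = of_nat k * z + complex_of_real (\<beta> i / 2) + complex_of_real ((\<Sum>j\<in>{r..s}. \<beta> j) / 2)"
      unfolding ka sumb by (simp add: add_divide_distrib)
    finally show ?thesis unfolding e1 e2 a_def .
  qed
  have "integrandI r s \<beta> k i z = exp (complex_of_real (real k - (real (nn r s) + 1) / 2) * z)
      * exp (\<Sum>j\<in>{r..i}. (z + complex_of_real (\<beta> j)) / 2) * exp (\<Sum>j\<in>{i..s}. (z + complex_of_real (\<beta> j)) / 2) / (P1 * P2)"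
    unfolding integrandI_def c1 c2 by simp
  also have "exp (complex_of_real (real k - (real (nn r s) + 1) / 2) * z)
      * exp (\<Sum>j\<in>{r..i}. (z + complex_of_real (\<beta> j)) / 2) * exp (\<Sum>j\<in>{i..s}. (z + complex_of_real (\<beta> j)) / 2)
      = exp (of_nat k * z) * complex_of_real (exp (\<beta> i / 2)) * complex_of_real (exp ((\<Sum>j\<in>{r..s}. \<beta> j) / 2))"
    by (simp only: expo flip: exp_add exp_of_real)
  finally show ?thesis by (simp add: exp_of_nat_mult P1_def P2_def)
qed

lemma ii_powi_2: "(\<i>::complex) powi (2 * m) = (-1) powi m"
  by (simp add: power_int_mult)

lemma ii_powi_add: "(\<i>::complex) powi (a + b) = \<i> powi a * \<i> powi b"
  by (rule power_int_add) simp

lemma ii_powi_shift: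
  assumes "r \<le> s"
  shows "\<i> powi (2 * r - s + 1 - i) * (- ((-1::complex) ^ nat (s - r + 1))) = \<i> powi (s + 1 - i)"
proof -
  have m1: "- ((-1::complex) ^ nat (s - r + 1)) = (-1) powi (s - r + 2)"
  proof -
    have "nat (s - r + 2) = Suc (nat (s - r + 1))" using assms by simp
    moreover have "(-1::complex) powi (s - r + 2) = (-1) ^ nat (s - r + 2)"
      using assms by (simp add: power_int_def)
    ultimately show ?thesis by simp
  qed
  have "\<i> powi (2 * r - s + 1 - i) * (- ((-1::complex) ^ nat (s - r + 1))) = \<i> powi (2 * r - s + 1 - i) * \<i> powi (2 * (s - r + 2))"
    unfolding m1 ii_powi_2 ..
  also have "\<dots> = \<i> powi ((s + 1 - i) + 4)" unfolding ii_powi_add[symmetric] by (simp add: algebra_simps)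
  also have "\<dots> = \<i> powi (s + 1 - i)" unfolding ii_powi_add by simp
  finally show ?thesis .
qed

lemma J_alg:
  fixes c X Y :: real and s i :: int
  defines "u \<equiv> \<i> powi (s + 1 - i)"
  assumes I: "I = u / complex_of_real pi * complex_of_real c * (complex_of_real X + \<i> * complex_of_real (pi * Y))"
  shows "I + (-1) powi (s + i) * cnj I = - 2 * \<i> powi (s - i) * complex_of_real c * complex_of_real Y"
proof -
  have cu: "cnj u = (-1) powi (s + 1 - i) * u"
    unfolding u_def by (simp flip: power_int_mult_distrib)
  have sg: "(-1::complex) powi (s + i) * (-1) powi (s + 1 - i) = -1"
  proof -
    have "(-1::complex) powi (s + i) * (-1) powi (s + 1 - i) = (-1) powi (2 * s + 1)"
      by (simp flip: power_int_add add: algebra_simps)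
    also have "\<dots> = (-1) powi (2 * s) * (-1)" by (subst power_int_add) auto
    also have "\<dots> = -1" by (simp add: power_int_mult)
    finally show ?thesis .
  qed
  have iu: "\<i> * u = - (\<i> powi (s - i))"
  proof -
    have e: "s - i + 2 = 1 + (s + 1 - i)" by simp
    have "\<i> * u = \<i> powi (s - i + 2)" unfolding u_def e ii_powi_add by simp
    also have "\<dots> = - (\<i> powi (s - i))" unfolding ii_powi_add by simp
    finally show ?thesis .
  qed
  have "cnj I = cnj u / complex_of_real pi * complex_of_real c * (complex_of_real X - \<i> * complex_of_real (pi * Y))"
    unfolding I by simp
  then have "I + (-1) powi (s + i) * cnj I = u / complex_of_real pi * complex_of_real c * (complex_of_real X + \<i> * complex_of_real (pi * Y))
      + ((-1) powi (s + i) * (-1) powi (s + 1 - i)) * u / complex_of_real pi * complex_of_real c * (complex_of_real X - \<i> * complex_of_real (pi * Y))"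
    unfolding I cu by (simp add: algebra_simps)
  also have "\<dots> = 2 * (\<i> * u) * complex_of_real c * complex_of_real Y"
    unfolding sg by (simp add: field_simps)
  finally show ?thesis unfolding iu by simp
qed

theorem propositionE1:
  fixes r s i :: int and \<beta> :: "int \<Rightarrow> real" and k :: nat and \<epsilon> :: real
  assumes "r \<le> s" and "inj_on \<beta> {r..s}"
    and "1 \<le> k" and "k \<le> nn r s"
    and "r \<le> i" and "i \<le> s"
    and "0 < \<epsilon>" and "\<epsilon> < pi"
  shows "(\<lambda>t::real. integrandI r s \<beta> k i (complex_of_real t + \<i> * complex_of_real \<epsilon>))
           integrable_on UNIV
         \<and> Ival r s \<beta> \<epsilon> k i =
           \<i> powi (s + 1 - i) / complex_of_real pi
           * complex_of_real (exp (\<beta> i / 2)) * complex_of_real (exp ((\<Sum>j\<in>{r..s}. \<beta> j) / 2))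
           * ((\<Sum>j\<in>{r..i}. complex_of_real ((- exp (\<beta> j)) ^ (k - 1) * \<beta> j * Fco r s \<beta> j i))
              + (\<Sum>j\<in>{i..s}. complex_of_real (exp (\<beta> j) ^ (k - 1))
                    * (complex_of_real (\<beta> j) + complex_of_real pi * \<i>)
                    * complex_of_real (Gco r s \<beta> j i)))
         \<and> Jval r s \<beta> \<epsilon> k i =
           2 * \<i> powi (s - i)
           * complex_of_real (exp (\<beta> i / 2)) * complex_of_real (exp ((\<Sum>j\<in>{r..s}. \<beta> j) / 2))
           * complex_of_real (\<Sum>j\<in>{r..i}. (- exp (\<beta> j)) ^ (k - 1) * Fco r s \<beta> j i)
         \<and> Jval r s \<beta> \<epsilon> k i =
           - 2 * \<i> powi (s - i)
           * complex_of_real (exp (\<beta> i / 2)) * complex_of_real (exp ((\<Sum>j\<in>{r..s}. \<beta> j) / 2))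
           * complex_of_real (\<Sum>j\<in>{i..s}. exp (\<beta> j) ^ (k - 1) * Gco r s \<beta> j i)"
proof -
  have rs: "r \<le> s" and ri: "r \<le> i" and isx: "i \<le> s" using assms by auto
  define B where "B j = exp (\<beta> j)" for j
  define S :: "(int + int) set" where "S = Inl ` {r..i} \<union> Inr ` {i..s}"
  define x :: "int + int \<Rightarrow> complex" where "x = case_sum (\<lambda>j. - complex_of_real (B j)) (\<lambda>j. complex_of_real (B j))"
  define c where "c = exp (\<beta> i / 2) * exp ((\<Sum>j\<in>{r..s}. \<beta> j) / 2)"
  define g where "g = (\<lambda>t. W \<epsilon> t ^ k / (\<Prod>l\<in>S. W \<epsilon> t - x l))"
  define A where "A = (\<lambda>l. x l ^ (k - 1) / (\<Prod>m\<in>S-{l}. x l - x m))"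
  define sgn where "sgn = (-1::complex) ^ nn r s"
  have Bpos: "B j > 0" for j by (simp add: B_def)
  have finS: "finite S" by (simp add: S_def)
  have cardS: "card S = nn r s + 1"
  proof -
    have "card S = card (Inl ` {r..i} :: (int + int) set) + card (Inr ` {i..s} :: (int + int) set)"
      unfolding S_def by (rule card_Un_disjoint) auto
    also have "\<dots> = card {r..i} + card {i..s}" by (simp add: card_image)
    also have "\<dots> = nn r s + 1" using ri isx by (simp add: nn_def)
    finally show ?thesis .
  qed
  have Binj: "a = b" if "a \<in> {r..s}" "b \<in> {r..s}" "B a = B b" for a b
    using assms(2) that by (auto simp: B_def inj_on_def)
  have Bne: "- complex_of_real (B a) \<noteq> complex_of_real (B b)" for a b
  proof
    assume "- complex_of_real (B a) = complex_of_real (B b)"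
    then have "complex_of_real (- B a) = complex_of_real (B b)" by simp
    then have "- B a = B b" using of_real_eq_iff by blast
    then show False using Bpos[of a] Bpos[of b] by linarith
  qed
  have injx: "inj_on x S"
  proof (rule inj_onI)
    fix l1 l2 assume l1: "l1 \<in> S" and l2: "l2 \<in> S" and eq: "x l1 = x l2"
    show "l1 = l2"
    proof (cases l1; cases l2)
      fix a b assume a: "l1 = Inl a" and b: "l2 = Inl b"
      then show ?thesis using eq l1 l2 Binj[of a b] ri isx by (auto simp: x_def S_def)
    next
      fix a b assume a: "l1 = Inl a" and b: "l2 = Inr b"
      then show ?thesis using eq Bne[of a b] by (auto simp: x_def)
    next
      fix a b assume a: "l1 = Inr a" and b: "l2 = Inl b"
      then show ?thesis using eq Bne[of b a] by (auto simp: x_def)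
    next
      fix a b assume a: "l1 = Inr a" and b: "l2 = Inr b"
      then show ?thesis using eq l1 l2 Binj[of a b] ri isx by (auto simp: x_def S_def)
    qed
  qed
  have re: "Im (x l) = 0" if "l \<in> S" for l by (cases l) (auto simp: x_def)
  have nz: "x l \<noteq> 0" if "l \<in> S" for l using Bpos by (cases l) (auto simp: x_def, metis less_irrefl, metis less_irrefl)
  have kN: "k < card S" using assms(4) cardS by simp
  have MI: "g integrable_on UNIV \<and> integral UNIV g = - (\<Sum>l\<in>S. A l * Lg (- x l))"
    unfolding g_def A_def by (rule main_integral[OF finS injx re nz assms(3) kN assms(7) assms(8)])
  from MI have gi: "g integrable_on UNIV" and gint: "integral UNIV g = - (\<Sum>l\<in>S. A l * Lg (- x l))" by auto
  have inlr: "Inl ` X \<inter> Inr ` Y = {}" for X Y :: "int set" by auto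
  have prodS: "(\<Prod>l\<in>S. w - x l) = (\<Prod>j\<in>{r..i}. w + complex_of_real (B j)) * (\<Prod>j\<in>{i..s}. w - complex_of_real (B j))" for w
    unfolding S_def by (subst prod.union_disjoint) (auto simp: prod.reindex inj_on_def x_def)
  have sumsplit: "(\<Sum>l\<in>S. f l) = (\<Sum>j\<in>{r..i}. f (Inl j)) + (\<Sum>j\<in>{i..s}. f (Inr j))" for f :: "int + int \<Rightarrow> complex"
    unfolding S_def by (subst sum.union_disjoint) (auto simp: sum.reindex inj_on_def)
  have integrand: "(\<lambda>t. integrandI r s \<beta> k i (complex_of_real t + \<i> * complex_of_real \<epsilon>)) = (\<lambda>t. complex_of_real c * g t)"
    by (rule ext) (simp add: integrand_eq[OF ri isx] g_def prodS W_def B_def c_def)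
  have conj1: "(\<lambda>t. integrandI r s \<beta> k i (complex_of_real t + \<i> * complex_of_real \<epsilon>)) integrable_on UNIV"
    unfolding integrand by (rule integrable_on_mult_right[OF gi])
  have intval: "integral UNIV (\<lambda>t. integrandI r s \<beta> k i (complex_of_real t + \<i> * complex_of_real \<epsilon>))
      = - complex_of_real c * (\<Sum>l\<in>S. A l * Lg (- x l))"
    unfolding integrand integral_mult_right gint by simp
  have sgn2: "sgn * sgn = 1" unfolding sgn_def by (simp flip: power_mult_distrib)
  have AL: "A (Inl j) = sgn * complex_of_real ((- B j) ^ (k - 1) * Fco r s \<beta> j i)" if j: "j \<in> {r..i}" for j
  proof -
    have Sm: "S - {Inl j} = Inl ` ({r..i} - {j}) \<union> Inr ` {i..s}" unfolding S_def by auto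
    have "(\<Prod>m\<in>S-{Inl j}. x (Inl j) - x m)
        = (\<Prod>m\<in>Inl ` ({r..i}-{j}). x (Inl j) - x m) * (\<Prod>m\<in>Inr ` {i..s}. x (Inl j) - x m)"
      unfolding Sm by (rule prod.union_disjoint) auto
    also have "(\<Prod>m\<in>Inl ` ({r..i}-{j}). x (Inl j) - x m) = (\<Prod>l\<in>{r..i}-{j}. - (complex_of_real (B j) - complex_of_real (B l)))"
      by (subst prod.reindex) (auto simp: inj_on_def intro!: prod.cong simp: x_def)
    also have "(\<Prod>m\<in>Inr ` {i..s}. x (Inl j) - x m) = (\<Prod>l\<in>{i..s}. - (complex_of_real (B j) + complex_of_real (B l)))"
      by (subst prod.reindex) (auto simp: inj_on_def intro!: prod.cong simp: x_def)
    also have "(\<Prod>l\<in>{r..i}-{j}. - (complex_of_real (B j) - complex_of_real (B l))) * (\<Prod>l\<in>{i..s}. - (complex_of_real (B j) + complex_of_real (B l)))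
        = (-1) ^ (card ({r..i}-{j}) + card {i..s})
        * complex_of_real ((\<Prod>l\<in>{r..i}-{j}. B j - B l) * (\<Prod>l\<in>{i..s}. B j + B l))"
      by (simp only: prod_uminus power_add of_real_mult of_real_prod of_real_diff of_real_add mult_ac)
    also have "card ({r..i}-{j}) + card {i..s} = nn r s"
      using j ri isx by (simp add: card_Diff_singleton nn_def; arith)
    finally have P: "(\<Prod>m\<in>S-{Inl j}. x (Inl j) - x m) = sgn * complex_of_real ((\<Prod>l\<in>{r..i}-{j}. B j - B l) * (\<Prod>l\<in>{i..s}. B j + B l))"
      unfolding sgn_def .
    have isg: "inverse sgn = sgn" using sgn2 by (metis inverse_unique)
    show ?thesis
      unfolding A_def P by (simp add: x_def Fco_def B_def divide_inverse inverse_mult_distrib isg mult_ac)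
  qed
  have AR: "A (Inr j) = sgn * complex_of_real (B j ^ (k - 1) * Gco r s \<beta> j i)" if j: "j \<in> {i..s}" for j
  proof -
    have Sm: "S - {Inr j} = Inl ` {r..i} \<union> Inr ` ({i..s} - {j})" unfolding S_def by auto
    have P: "(\<Prod>m\<in>S-{Inr j}. x (Inr j) - x m)
        = complex_of_real ((\<Prod>l\<in>{r..i}. B j + B l) * (\<Prod>l\<in>{i..s}-{j}. B j - B l))"
      unfolding Sm by (subst prod.union_disjoint) (auto simp: prod.reindex inj_on_def x_def of_real_prod intro!: prod.cong)
    have "sgn * complex_of_real (B j ^ (k - 1) * Gco r s \<beta> j i)
        = (sgn * sgn) * complex_of_real (B j ^ (k - 1) / ((\<Prod>l\<in>{r..i}. B j + B l) * (\<Prod>l\<in>{i..s}-{j}. B j - B l)))"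
      by (simp add: Gco_def B_def sgn_def)
    then show ?thesis unfolding A_def P sgn2 by (simp add: x_def)
  qed
  have LgL: "Lg (- x (Inl j)) = complex_of_real (\<beta> j)" for j
    using Lg_pos[OF Bpos[of j]] by (simp add: x_def B_def)
  have LgR: "Lg (- x (Inr j)) = complex_of_real (\<beta> j) + complex_of_real pi * \<i>" for j
    using Lg_neg[OF Bpos[of j]] by (simp add: x_def B_def)
  define TF where "TF = (\<Sum>j\<in>{r..i}. complex_of_real ((- exp (\<beta> j)) ^ (k - 1) * \<beta> j * Fco r s \<beta> j i))"
  define TG where "TG = (\<Sum>j\<in>{i..s}. complex_of_real (exp (\<beta> j) ^ (k - 1))
                    * (complex_of_real (\<beta> j) + complex_of_real pi * \<i>)
                    * complex_of_real (Gco r s \<beta> j i))"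
  have sumAL: "(\<Sum>l\<in>S. A l * Lg (- x l)) = sgn * (TF + TG)"
  proof -
    have "(\<Sum>l\<in>S. A l * Lg (- x l)) = (\<Sum>j\<in>{r..i}. A (Inl j) * Lg (- x (Inl j))) + (\<Sum>j\<in>{i..s}. A (Inr j) * Lg (- x (Inr j)))"
      by (rule sumsplit)
    also have "(\<Sum>j\<in>{r..i}. A (Inl j) * Lg (- x (Inl j))) = sgn * TF"
      unfolding TF_def sum_distrib_left by (rule sum.cong) (auto simp: AL LgL B_def)
    also have "(\<Sum>j\<in>{i..s}. A (Inr j) * Lg (- x (Inr j))) = sgn * TG"
      unfolding TG_def sum_distrib_left by (rule sum.cong) (auto simp: AR LgR B_def)
    finally show ?thesis by (simp add: distrib_left)
  qed
  define YF where "YF = (\<Sum>j\<in>{r..i}. (- exp (\<beta> j)) ^ (k - 1) * Fco r s \<beta> j i)"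
  define YG where "YG = (\<Sum>j\<in>{i..s}. exp (\<beta> j) ^ (k - 1) * Gco r s \<beta> j i)"
  have YFG: "YF = - YG"
  proof -
    have "(\<Sum>l\<in>S. A l) = 0"
      unfolding A_def by (rule residue_sum_zero[OF finS injx]) (use kN assms(3) in simp)
    moreover have "(\<Sum>l\<in>S. A l) = sgn * complex_of_real (YF + YG)"
    proof -
      have "(\<Sum>l\<in>S. A l) = (\<Sum>j\<in>{r..i}. A (Inl j)) + (\<Sum>j\<in>{i..s}. A (Inr j))" by (rule sumsplit)
      also have "(\<Sum>j\<in>{r..i}. A (Inl j)) = sgn * complex_of_real YF"
        unfolding YF_def of_real_sum sum_distrib_left by (rule sum.cong) (auto simp: AL B_def)
      also have "(\<Sum>j\<in>{i..s}. A (Inr j)) = sgn * complex_of_real YG"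
        unfolding YG_def of_real_sum sum_distrib_left by (rule sum.cong) (auto simp: AR B_def)
      finally show ?thesis by (simp add: distrib_left)
    qed
    moreover have "sgn \<noteq> 0" using sgn2 by auto
    ultimately have "complex_of_real (YF + YG) = 0" by simp
    then have "YF + YG = 0" by (simp only: of_real_eq_0_iff)
    then show ?thesis by linarith
  qed
  have sh: "\<i> powi (2 * r - s + 1 - i) * (- sgn) = \<i> powi (s + 1 - i)"
    unfolding sgn_def nn_def by (rule ii_powi_shift[OF rs])
  have Ieq: "Ival r s \<beta> \<epsilon> k i = \<i> powi (s + 1 - i) / complex_of_real pi * complex_of_real c * (TF + TG)"
  proof -
    have "Ival r s \<beta> \<epsilon> k i = 2 * \<i> powi (2 * r - s + 1 - i) * ((- complex_of_real c * (sgn * (TF + TG))) / complex_of_real (2 * pi))"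
      unfolding Ival_def intval sumAL ..
    also have "\<dots> = (\<i> powi (2 * r - s + 1 - i) * (- sgn)) / complex_of_real pi * complex_of_real c * (TF + TG)"
      by (simp add: field_simps)
    finally show ?thesis unfolding sh .
  qed
  define X where "X = (\<Sum>j\<in>{r..i}. (- exp (\<beta> j)) ^ (k - 1) * \<beta> j * Fco r s \<beta> j i)
      + (\<Sum>j\<in>{i..s}. exp (\<beta> j) ^ (k - 1) * \<beta> j * Gco r s \<beta> j i)"
  have TFG: "TF + TG = complex_of_real X + \<i> * complex_of_real (pi * YG)"
  proof -
    have "TG = (\<Sum>j\<in>{i..s}. complex_of_real (exp (\<beta> j) ^ (k - 1) * \<beta> j * Gco r s \<beta> j i)
                 + \<i> * complex_of_real (pi * (exp (\<beta> j) ^ (k - 1) * Gco r s \<beta> j i)))"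
      unfolding TG_def by (rule sum.cong) (simp_all add: algebra_simps)
    also have "\<dots> = complex_of_real (\<Sum>j\<in>{i..s}. exp (\<beta> j) ^ (k - 1) * \<beta> j * Gco r s \<beta> j i)
                 + \<i> * complex_of_real (pi * YG)"
      unfolding YG_def sum.distrib of_real_sum sum_distrib_left ..
    finally show ?thesis unfolding TF_def X_def of_real_add of_real_sum by simp
  qed
  have Jeq: "Jval r s \<beta> \<epsilon> k i = - 2 * \<i> powi (s - i) * complex_of_real c * complex_of_real YG"
    unfolding Jval_def by (rule J_alg[where c=c and X=X and Y=YG]) (simp add: Ieq TFG)
  have cc: "complex_of_real c = complex_of_real (exp (\<beta> i / 2)) * complex_of_real (exp ((\<Sum>j\<in>{r..s}. \<beta> j) / 2))"
    by (simp add: c_def)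
  show ?thesis
  proof (intro conjI)
    show "(\<lambda>t. integrandI r s \<beta> k i (complex_of_real t + \<i> * complex_of_real \<epsilon>)) integrable_on UNIV" by (rule conj1)
    show "Ival r s \<beta> \<epsilon> k i =
           \<i> powi (s + 1 - i) / complex_of_real pi
           * complex_of_real (exp (\<beta> i / 2)) * complex_of_real (exp ((\<Sum>j\<in>{r..s}. \<beta> j) / 2))
           * ((\<Sum>j\<in>{r..i}. complex_of_real ((- exp (\<beta> j)) ^ (k - 1) * \<beta> j * Fco r s \<beta> j i))
              + (\<Sum>j\<in>{i..s}. complex_of_real (exp (\<beta> j) ^ (k - 1))
                    * (complex_of_real (\<beta> j) + complex_of_real pi * \<i>)
                    * complex_of_real (Gco r s \<beta> j i)))"
      unfolding Ieq cc TF_def TG_def by (simp only: mult.assoc)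
    show "Jval r s \<beta> \<epsilon> k i =
           2 * \<i> powi (s - i)
           * complex_of_real (exp (\<beta> i / 2)) * complex_of_real (exp ((\<Sum>j\<in>{r..s}. \<beta> j) / 2))
           * complex_of_real (\<Sum>j\<in>{r..i}. (- exp (\<beta> j)) ^ (k - 1) * Fco r s \<beta> j i)"
      unfolding Jeq cc YF_def[symmetric] YFG by simp
    show "Jval r s \<beta> \<epsilon> k i =
           - 2 * \<i> powi (s - i)
           * complex_of_real (exp (\<beta> i / 2)) * complex_of_real (exp ((\<Sum>j\<in>{r..s}. \<beta> j) / 2))
           * complex_of_real (\<Sum>j\<in>{i..s}. exp (\<beta> j) ^ (k - 1) * Gco r s \<beta> j i)"
      unfolding Jeq cc YG_def[symmetric] by (simp only: mult.assoc)
  qed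
qed

end
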